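(* Let $0<\beta<1$, $p=\lceil\beta^{-1}\rceil-1$, and let $t$ be an integer with $2\le t\le p$. Let $G$ be a graph of order $n$ with minimum degree $(1-\beta)n$. Then $$\sum_{S\in\mathcal{K}_{t+1}}\widetilde D(S)\le\big(t-1+(p-2t+2)(t+1)\beta\big)k_{t+1}+(t-1)\sum_{S\in\mathcal{K}_{t+1}}D_+(S)-(1-t\beta)(p-t+1)\beta n k_t-(t-1)(t+2)\frac{k_{t+2}}{n}-(1-t\beta)n\sum_{T\in\mathcal{K}_t}D_+(T).$$ Moreover, equality holds if and only if for each $T\in\mathcal{K}_t$, either $D_-(T)=1-t\beta$ or $D_-(T)=(p-t+1)\beta$.
   Context: All graphs are finite and simple. For a graph $G$, $\mathcal{K}_t$ denotes the set of $t$-cliques of $G$ (identified with their vertex sets) and $k_t=|\mathcal{K}_t|$; for a clique $S$, $\mathcal{K}_t(S)$ is the set of $t$-cliques contained in $S$. The degree $d(T)$ of a $t$-clique $T$ is the number of $(t+1)$-cliques containing $T$, and $D(T)=d(T)/n$. For $0<\beta<1$ with $p=\lceil\beta^{-1}\rceil-1$, and $T\in\mathcal{K}_t$ with $1\le t\le p+1$, define $D_-(T)=\min\{D(T),(p-t+1)\beta\}$ and $D_+(T)=D(T)-D_-(T)$. For $2\le t\le p$ and $S\in\mathcal{K}_{t+1}$, define $\widetilde D(S)=\sum_{T\in\mathcal{K}_t(S)}D_-(T)-\big(2-(t+1)\beta+(t-1)D_-(S)\big)$. *)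

theory Defs
  imports Complex_Main
begin

definition simple_graph :: "'a set \<Rightarrow> ('a \<Rightarrow> 'a \<Rightarrow> bool) \<Rightarrow> bool" where
  "simple_graph V E \<longleftrightarrow> finite V \<and> (\<forall>x y. E x y \<longrightarrow> x \<in> V \<and> y \<in> V)
     \<and> (\<forall>x y. E x y \<longrightarrow> E y x) \<and> (\<forall>x. \<not> E x x)"

definition vdeg :: "'a set \<Rightarrow> ('a \<Rightarrow> 'a \<Rightarrow> bool) \<Rightarrow> 'a \<Rightarrow> nat" where
  "vdeg V E v = card {u \<in> V. E v u}"

definition min_degree :: "'a set \<Rightarrow> ('a \<Rightarrow> 'a \<Rightarrow> bool) \<Rightarrow> nat" where
  "min_degree V E = Min (vdeg V E ` V)"

definition cliques :: "'a set \<Rightarrow> ('a \<Rightarrow> 'a \<Rightarrow> bool) \<Rightarrow> nat \<Rightarrow> 'a set set" where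
  "cliques V E t = {S. S \<subseteq> V \<and> card S = t \<and> (\<forall>x\<in>S. \<forall>y\<in>S. x \<noteq> y \<longrightarrow> E x y)}"

definition kcount :: "'a set \<Rightarrow> ('a \<Rightarrow> 'a \<Rightarrow> bool) \<Rightarrow> nat \<Rightarrow> nat" where
  "kcount V E t = card (cliques V E t)"

definition sub_cliques :: "'a set \<Rightarrow> ('a \<Rightarrow> 'a \<Rightarrow> bool) \<Rightarrow> nat \<Rightarrow> 'a set \<Rightarrow> 'a set set" where
  "sub_cliques V E t S = {T \<in> cliques V E t. T \<subseteq> S}"

definition cdeg :: "'a set \<Rightarrow> ('a \<Rightarrow> 'a \<Rightarrow> bool) \<Rightarrow> 'a set \<Rightarrow> nat" where
  "cdeg V E T = card {S \<in> cliques V E (card T + 1). T \<subseteq> S}"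

definition Dn :: "'a set \<Rightarrow> ('a \<Rightarrow> 'a \<Rightarrow> bool) \<Rightarrow> 'a set \<Rightarrow> real" where
  "Dn V E T = real (cdeg V E T) / real (card V)"

definition pval :: "real \<Rightarrow> nat" where
  "pval \<beta> = nat (\<lceil>1 / \<beta>\<rceil> - 1)"

definition Dminus :: "'a set \<Rightarrow> ('a \<Rightarrow> 'a \<Rightarrow> bool) \<Rightarrow> real \<Rightarrow> 'a set \<Rightarrow> real" where
  "Dminus V E \<beta> T = min (Dn V E T) ((real (pval \<beta>) - real (card T) + 1) * \<beta>)"

definition Dplus :: "'a set \<Rightarrow> ('a \<Rightarrow> 'a \<Rightarrow> bool) \<Rightarrow> real \<Rightarrow> 'a set \<Rightarrow> real" where
  "Dplus V E \<beta> T = Dn V E T - Dminus V E \<beta> T"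

definition Dtilde :: "'a set \<Rightarrow> ('a \<Rightarrow> 'a \<Rightarrow> bool) \<Rightarrow> real \<Rightarrow> nat \<Rightarrow> 'a set \<Rightarrow> real" where
  "Dtilde V E \<beta> t S = (\<Sum>T\<in>sub_cliques V E t S. Dminus V E \<beta> T)
      - (2 - (real t + 1) * \<beta> + (real t - 1) * Dminus V E \<beta> S)"

end

theory Submission imports Defs begin

lemma finite_cliques: "finite V \<Longrightarrow> finite (cliques V E m)"
  unfolding cliques_def by (rule finite_subset[of _ "Pow V"]) auto

lemma card_sub_cliques:
  assumes U: "U \<in> cliques V E (Suc m)"
  shows "card (sub_cliques V E m U) = Suc m"
proof -
  have fU: "finite U" using U unfolding cliques_def by (auto intro: card_ge_0_finite)
  have eq: "sub_cliques V E m U = (\<lambda>x. U - {x}) ` U"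
  proof
    show "sub_cliques V E m U \<subseteq> (\<lambda>x. U - {x}) ` U"
    proof
      fix T assume T: "T \<in> sub_cliques V E m U"
      hence TU: "T \<subseteq> U" and cT: "card T = m" unfolding sub_cliques_def cliques_def by auto
      have "card (U - T) = 1" using TU cT U fU by (simp add: card_Diff_subset cliques_def finite_subset)
      then obtain x where x: "U - T = {x}" using card_1_singletonE by blast
      hence "T = U - {x}" "x \<in> U" using TU by auto
      thus "T \<in> (\<lambda>x. U - {x}) ` U" by blast
    qed
  next
    show "(\<lambda>x. U - {x}) ` U \<subseteq> sub_cliques V E m U"
      using U fU unfolding sub_cliques_def cliques_def by auto
  qed
  have inj: "inj_on (\<lambda>x. U - {x}) U" by (auto simp: inj_on_def)
  show ?thesis unfolding eq card_image[OF inj] using U by (simp add: cliques_def)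
qed

lemma double_count:
  assumes "finite V"
  shows "(\<Sum>S\<in>cliques V E (Suc m). \<Sum>T\<in>sub_cliques V E m S. f T)
       = (\<Sum>T\<in>cliques V E m. real (cdeg V E T) * f T)"
proof -
  have "(\<Sum>S\<in>cliques V E (Suc m). \<Sum>T\<in>sub_cliques V E m S. f T)
      = (\<Sum>S\<in>cliques V E (Suc m). \<Sum>T\<in>{T. T \<in> cliques V E m \<and> T \<subseteq> S}. f T)"
    unfolding sub_cliques_def by simp
  also have "\<dots> = (\<Sum>T\<in>cliques V E m. \<Sum>S\<in>{S. S \<in> cliques V E (Suc m) \<and> T \<subseteq> S}. f T)"
    by (rule sum.swap_restrict) (use assms finite_cliques in auto)
  also have "\<dots> = (\<Sum>T\<in>cliques V E m. real (cdeg V E T) * f T)"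
    by (rule sum.cong) (auto simp: cdeg_def cliques_def)
  finally show ?thesis .
qed

lemma sum_cdeg:
  assumes "finite V"
  shows "(\<Sum>T\<in>cliques V E m. real (cdeg V E T)) = real (Suc m) * real (kcount V E (Suc m))"
proof -
  have "(\<Sum>T\<in>cliques V E m. real (cdeg V E T)) = (\<Sum>T\<in>cliques V E m. real (cdeg V E T) * 1)" by simp
  also have "\<dots> = (\<Sum>S\<in>cliques V E (Suc m). \<Sum>T\<in>sub_cliques V E m S. (1::real))"
    by (rule double_count[OF assms, symmetric])
  also have "\<dots> = (\<Sum>S\<in>cliques V E (Suc m). real (Suc m))"
    by (rule sum.cong) (auto simp: card_sub_cliques simp del: of_nat_Suc)
  also have "\<dots> = real (Suc m) * real (kcount V E (Suc m))" by (simp add: kcount_def)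
  finally show ?thesis .
qed

lemma cdeg_lower:
  assumes G: "simple_graph V E" and V: "V \<noteq> {}"
    and md: "real (min_degree V E) = (1 - \<beta>) * real (card V)"
    and T: "T \<in> cliques V E t"
  shows "(1 - real t * \<beta>) * real (card V) \<le> real (cdeg V E T)"
proof -
  have fV: "finite V" using G unfolding simple_graph_def by auto
  have TV: "T \<subseteq> V" and cT: "card T = t" and cl: "\<forall>x\<in>T. \<forall>y\<in>T. x \<noteq> y \<longrightarrow> E x y"
    using T unfolding cliques_def by auto
  have fT: "finite T" using TV fV finite_subset by blast
  define N where "N = {u \<in> V - T. \<forall>v\<in>T. E v u}"
  have NV: "N \<subseteq> V" unfolding N_def by auto
  have bij: "{S \<in> cliques V E (card T + 1). T \<subseteq> S} = (\<lambda>u. insert u T) ` N"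
  proof
    show "{S \<in> cliques V E (card T + 1). T \<subseteq> S} \<subseteq> (\<lambda>u. insert u T) ` N"
    proof
      fix S assume S: "S \<in> {S \<in> cliques V E (card T + 1). T \<subseteq> S}"
      hence SV: "S \<subseteq> V" and cS: "card S = card T + 1" and TS: "T \<subseteq> S"
        and clS: "\<forall>x\<in>S. \<forall>y\<in>S. x \<noteq> y \<longrightarrow> E x y" unfolding cliques_def by auto
      have fS: "finite S" using SV fV finite_subset by blast
      have "card (S - T) = 1" using cS TS fT by (simp add: card_Diff_subset)
      then obtain u where u: "S - T = {u}" using card_1_singletonE by blast
      hence Sins: "S = insert u T" using TS by auto
      have uS: "u \<in> S" "u \<notin> T" using u by auto
      have "\<forall>v\<in>T. E v u"
      proof
        fix v assume "v \<in> T"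
        hence "v \<in> S" "v \<noteq> u" using TS uS by auto
        thus "E v u" using clS uS by blast
      qed
      hence "u \<in> N" unfolding N_def using uS SV by blast
      thus "S \<in> (\<lambda>u. insert u T) ` N" using Sins by blast
    qed
  next
    show "(\<lambda>u. insert u T) ` N \<subseteq> {S \<in> cliques V E (card T + 1). T \<subseteq> S}"
    proof
      fix S assume "S \<in> (\<lambda>u. insert u T) ` N"
      then obtain u where u: "u \<in> N" and S: "S = insert u T" by blast
      have uT: "u \<notin> T" "u \<in> V" and adj: "\<forall>v\<in>T. E v u" using u unfolding N_def by auto
      have sym: "\<And>x y. E x y \<Longrightarrow> E y x" using G unfolding simple_graph_def by blast
      show "S \<in> {S \<in> cliques V E (card T + 1). T \<subseteq> S}"
        unfolding cliques_def S using uT TV fT cl adj sym by auto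
    qed
  qed
  have inj: "inj_on (\<lambda>u. insert u T) N" unfolding inj_on_def N_def by auto
  have cd: "cdeg V E T = card N" unfolding cdeg_def bij card_image[OF inj] ..
  define NN where "NN v = {u \<in> V. \<not> E v u}" for v
  have sub: "V - N \<subseteq> (\<Union>v\<in>T. NN v)"
  proof
    fix u assume u: "u \<in> V - N"
    show "u \<in> (\<Union>v\<in>T. NN v)"
    proof (cases "u \<in> T")
      case True
      have "\<not> E u u" using G unfolding simple_graph_def by blast
      thus ?thesis using True u unfolding NN_def by auto
    next
      case False
      thus ?thesis using u unfolding NN_def N_def by auto
    qed
  qed
  have NNb: "real (card (NN v)) \<le> \<beta> * real (card V)" if v: "v \<in> V" for v
  proof -
    have "vdeg V E v \<ge> min_degree V E" unfolding min_degree_def using v fV by auto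
    moreover have "card (NN v) + vdeg V E v = card V"
    proof -
      have "card (NN v) + vdeg V E v = card (NN v \<union> {u \<in> V. E v u})"
        unfolding vdeg_def NN_def by (subst card_Un_disjoint) (use fV in auto)
      also have "NN v \<union> {u \<in> V. E v u} = V" unfolding NN_def by auto
      finally show ?thesis .
    qed
    ultimately have "real (card (NN v)) \<le> real (card V) - real (min_degree V E)" by linarith
    thus ?thesis using md by (simp add: algebra_simps)
  qed
  have "card (V - N) \<le> card (\<Union>v\<in>T. NN v)"
  proof (rule card_mono[OF _ sub])
    show "finite (\<Union>v\<in>T. NN v)" using fT fV unfolding NN_def by (intro finite_UN_I) auto
  qed
  also have "\<dots> \<le> (\<Sum>v\<in>T. card (NN v))" by (rule card_UN_le[OF fT])
  finally have "real (card (V - N)) \<le> (\<Sum>v\<in>T. real (card (NN v)))"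
    by (metis of_nat_le_iff of_nat_sum)
  also have "\<dots> \<le> (\<Sum>v\<in>T. \<beta> * real (card V))" by (rule sum_mono) (use NNb TV in auto)
  also have "\<dots> = real t * \<beta> * real (card V)" using cT by simp
  finally have a: "real (card (V - N)) \<le> real t * \<beta> * real (card V)" .
  have "card (V - N) = card V - card N" using NV fV by (simp add: card_Diff_subset finite_subset)
  moreover have "card N \<le> card V" using NV fV by (simp add: card_mono)
  ultimately have "real (card (V - N)) = real (card V) - real (card N)" by simp
  thus ?thesis using a cd by (simp add: algebra_simps)
qed


lemma pointwise:
  fixes n x c a :: real
  assumes n: "n > 0" and cx: "c * n \<le> x" and ca: "c \<le> a"
  shows "0 \<le> (c+a)*x - c*a*n - c*n*(x/n - min (x/n) a) - x*min (x/n) a"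
    and "((c+a)*x - c*a*n - c*n*(x/n - min (x/n) a) - x*min (x/n) a = 0)
          \<longleftrightarrow> (min (x/n) a = c \<or> min (x/n) a = a)"
proof -
  define D where "D = x / n"
  have x: "x = n * D" using n unfolding D_def by simp
  have cD: "c \<le> D" using cx n unfolding D_def by (simp add: field_simps)
  have "0 \<le> (c+a)*x - c*a*n - c*n*(x/n - min (x/n) a) - x*min (x/n) a
     \<and> (((c+a)*x - c*a*n - c*n*(x/n - min (x/n) a) - x*min (x/n) a = 0)
          \<longleftrightarrow> (min (x/n) a = c \<or> min (x/n) a = a))"
  proof (cases "D \<le> a")
    case True
    hence m: "min (x/n) a = D" unfolding D_def by simp
    have e: "(c+a)*x - c*a*n - c*n*(x/n - min (x/n) a) - x*min (x/n) a = n * ((D - c) * (a - D))"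
      unfolding m using n by (simp add: x algebra_simps)
    have nn: "0 \<le> (D - c) * (a - D)" using True cD by simp
    show ?thesis unfolding e using n nn by (auto simp: m)
  next
    case False
    hence m: "min (x/n) a = a" unfolding D_def by simp
    have e: "(c+a)*x - c*a*n - c*n*(x/n - min (x/n) a) - x*min (x/n) a = 0"
      unfolding m using n by (simp add: x algebra_simps)
    show ?thesis using e by (simp add: m)
  qed
  thus "0 \<le> (c+a)*x - c*a*n - c*n*(x/n - min (x/n) a) - x*min (x/n) a"
    and "((c+a)*x - c*a*n - c*n*(x/n - min (x/n) a) - x*min (x/n) a = 0)
          \<longleftrightarrow> (min (x/n) a = c \<or> min (x/n) a = a)" by auto
qed

theorem mainTheorem12:
  fixes V :: "'a set" and E :: "'a \<Rightarrow> 'a \<Rightarrow> bool" and \<beta> :: real and t :: nat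
  assumes "simple_graph V E" and "V \<noteq> {}"
    and "0 < \<beta>" and "\<beta> < 1"
    and "2 \<le> t" and "t \<le> pval \<beta>"
    and "real (min_degree V E) = (1 - \<beta>) * real (card V)"
  shows "((\<Sum>S\<in>cliques V E (t+1). Dtilde V E \<beta> t S)
      \<le> (real t - 1 + (real (pval \<beta>) - 2 * real t + 2) * (real t + 1) * \<beta>) * real (kcount V E (t+1))
        + (real t - 1) * (\<Sum>S\<in>cliques V E (t+1). Dplus V E \<beta> S)
        - (1 - real t * \<beta>) * (real (pval \<beta>) - real t + 1) * \<beta> * real (card V) * real (kcount V E t)
        - (real t - 1) * (real t + 2) * real (kcount V E (t+2)) / real (card V)
        - (1 - real t * \<beta>) * real (card V) * (\<Sum>T\<in>cliques V E t. Dplus V E \<beta> T))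
    \<and> ((\<Sum>S\<in>cliques V E (t+1). Dtilde V E \<beta> t S)
      = (real t - 1 + (real (pval \<beta>) - 2 * real t + 2) * (real t + 1) * \<beta>) * real (kcount V E (t+1))
        + (real t - 1) * (\<Sum>S\<in>cliques V E (t+1). Dplus V E \<beta> S)
        - (1 - real t * \<beta>) * (real (pval \<beta>) - real t + 1) * \<beta> * real (card V) * real (kcount V E t)
        - (real t - 1) * (real t + 2) * real (kcount V E (t+2)) / real (card V)
        - (1 - real t * \<beta>) * real (card V) * (\<Sum>T\<in>cliques V E t. Dplus V E \<beta> T)
      \<longleftrightarrow> (\<forall>T\<in>cliques V E t. Dminus V E \<beta> T = 1 - real t * \<beta>
                              \<or> Dminus V E \<beta> T = (real (pval \<beta>) - real t + 1) * \<beta>))"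
  proof -
  have fV: "finite V" using assms(1) unfolding simple_graph_def by auto
  define n where "n = real (card V)"
  have n: "n > 0" using fV assms(2) unfolding n_def by (simp add: card_gt_0_iff)
  define p where "p = real (pval \<beta>)"
  define c where "c = 1 - real t * \<beta>"
  define a where "a = (p - real t + 1) * \<beta>"
  have ca: "c \<le> a"
  proof -
    have "\<lceil>1 / \<beta>\<rceil> \<ge> 1" using assms(3,4) by simp
    hence "p + 1 = real_of_int \<lceil>1 / \<beta>\<rceil>" unfolding p_def pval_def by simp
    hence "p + 1 \<ge> 1 / \<beta>" by linarith
    hence "(p + 1) * \<beta> \<ge> 1" using assms(3) by (simp add: field_simps)
    thus ?thesis unfolding c_def a_def by (simp add: algebra_simps)
  qed
  define K where "K = cliques V E t"
  define K1 where "K1 = cliques V E (t+1)"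
  define k1 where "k1 = real (kcount V E (t+1))"
  define k2 where "k2 = real (kcount V E (t+2))"
  define kt where "kt = real (kcount V E t)"
  define h where "h T = (c+a)*real (cdeg V E T) - c*a*n - c*n*Dplus V E \<beta> T
      - real (cdeg V E T) * Dminus V E \<beta> T" for T
  have hT: "0 \<le> h T \<and> (h T = 0 \<longleftrightarrow> (Dminus V E \<beta> T = c \<or> Dminus V E \<beta> T = a))" if T: "T \<in> K" for T
  proof -
    have cT: "card T = t" using T unfolding K_def cliques_def by auto
    have dm: "Dminus V E \<beta> T = min (real (cdeg V E T) / n) a"
      unfolding Dminus_def Dn_def a_def p_def n_def cT ..
    have dp: "Dplus V E \<beta> T = real (cdeg V E T) / n - min (real (cdeg V E T) / n) a"
      unfolding Dplus_def dm by (simp add: Dn_def n_def)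
    have cx: "c * n \<le> real (cdeg V E T)"
      using cdeg_lower[OF assms(1,2,7)] T unfolding K_def c_def n_def by blast
    show ?thesis unfolding h_def dp dm using pointwise[OF n cx ca] by simp
  qed
  have A: "(\<Sum>S\<in>K1. \<Sum>T\<in>sub_cliques V E t S. Dminus V E \<beta> T)
      = (\<Sum>T\<in>K. real (cdeg V E T) * Dminus V E \<beta> T)"
    using double_count[OF fV, where E=E and m=t] unfolding K_def K1_def by simp
  have B: "(\<Sum>T\<in>K. real (cdeg V E T)) = (real t + 1) * k1"
    using sum_cdeg[OF fV, where E=E and m=t] unfolding K_def k1_def by simp
  have Q0: "(\<Sum>S\<in>K1. real (cdeg V E S)) = (real t + 2) * k2"
    using sum_cdeg[OF fV, where E=E and m="t+1"] unfolding K1_def k2_def by (simp add: numeral_2_eq_2)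
  have Q: "(\<Sum>S\<in>K1. Dn V E S) = (real t + 2) * k2 / n"
    unfolding Dn_def n_def[symmetric] sum_divide_distrib[symmetric] Q0 ..
  have DT: "(\<Sum>S\<in>K1. Dtilde V E \<beta> t S)
     = (\<Sum>T\<in>K. real (cdeg V E T) * Dminus V E \<beta> T) - (2 - (real t + 1) * \<beta>) * k1
       - (real t - 1) * ((\<Sum>S\<in>K1. Dn V E S) - (\<Sum>S\<in>K1. Dplus V E \<beta> S))"
  proof -
    have "(\<Sum>S\<in>K1. Dtilde V E \<beta> t S) = (\<Sum>S\<in>K1. \<Sum>T\<in>sub_cliques V E t S. Dminus V E \<beta> T)
       - (\<Sum>S\<in>K1. (2 - (real t + 1) * \<beta>)) - (real t - 1) * (\<Sum>S\<in>K1. Dminus V E \<beta> S)"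
      unfolding Dtilde_def by (simp add: sum_subtractf sum.distrib sum_distrib_left)
    also have "(\<Sum>S\<in>K1. Dminus V E \<beta> S) = (\<Sum>S\<in>K1. Dn V E S) - (\<Sum>S\<in>K1. Dplus V E \<beta> S)"
      unfolding Dplus_def by (simp add: sum_subtractf)
    also have "(\<Sum>S\<in>K1. (2 - (real t + 1) * \<beta>)) = (2 - (real t + 1) * \<beta>) * k1"
      unfolding K1_def k1_def kcount_def by simp
    finally show ?thesis unfolding A .
  qed
  have H: "(\<Sum>T\<in>K. h T) = (c+a) * ((real t + 1) * k1) - c*a*n*kt - c*n*(\<Sum>T\<in>K. Dplus V E \<beta> T)
      - (\<Sum>T\<in>K. real (cdeg V E T) * Dminus V E \<beta> T)"
    unfolding h_def B[symmetric] by (simp add: sum_subtractf sum_distrib_left kt_def kcount_def K_def)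
  define L where "L = (\<Sum>S\<in>K1. Dtilde V E \<beta> t S)"
  define R where "R = (real t - 1 + (p - 2 * real t + 2) * (real t + 1) * \<beta>) * k1
        + (real t - 1) * (\<Sum>S\<in>K1. Dplus V E \<beta> S)
        - c * (p - real t + 1) * \<beta> * n * kt
        - (real t - 1) * (real t + 2) * k2 / n
        - c * n * (\<Sum>T\<in>K. Dplus V E \<beta> T)"
  have key: "R - L = (\<Sum>T\<in>K. h T)"
    unfolding R_def L_def DT Q H a_def c_def using n by (simp add: field_simps)
  have nonneg: "0 \<le> (\<Sum>T\<in>K. h T)" by (rule sum_nonneg) (use hT in blast)
  have fK: "finite K" unfolding K_def using finite_cliques[OF fV] .
  have eqiff: "(\<Sum>T\<in>K. h T) = 0 \<longleftrightarrow> (\<forall>T\<in>K. h T = 0)"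
    by (rule sum_nonneg_eq_0_iff[OF fK]) (use hT in blast)
  have main: "L \<le> R \<and> (L = R \<longleftrightarrow> (\<forall>T\<in>K. Dminus V E \<beta> T = c \<or> Dminus V E \<beta> T = a))"
  proof -
    have "L = R \<longleftrightarrow> (\<Sum>T\<in>K. h T) = 0" using key by linarith
    also have "\<dots> \<longleftrightarrow> (\<forall>T\<in>K. Dminus V E \<beta> T = c \<or> Dminus V E \<beta> T = a)"
      unfolding eqiff using hT by blast
    finally show ?thesis using key nonneg by linarith
  qed
  show ?thesis using main
    unfolding L_def R_def K_def K1_def k1_def k2_def kt_def c_def a_def p_def n_def by simp
qed

end
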